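(* For every $\Delta\ge 3$, the classes $\mathrm{coLP}[\mathsf{GRAPH}_\Delta]$ and $\mathrm{NLP}[\mathsf{GRAPH}_\Delta]$ are incomparable with respect to inclusion (neither contains the other); in particular $\mathrm{coLP}$ and $\mathrm{NLP}$ are incomparable.
   Context: Graphs. All graphs are finite, nonempty, simple, undirected and connected, and labeled: a graph is a triple $G=(V(G),E(G),\lambda_G)$ with labeling $\lambda_G:V(G)\to\{0,1\}^*$. $\mathsf{GRAPH}$ is the set of all graphs. A graph property is a subset of $\mathsf{GRAPH}$ closed under label-preserving isomorphism; its complement is $\overline P=\mathsf{GRAPH}\setminus P$. For a class $\mathcal C$ of properties and a set $B$ of graphs, $\mathcal C[B]=\{P\cap B : P\in\mathcal C\}$. $N^G_r(u)$ denotes the subgraph of $G$ induced by the nodes at distance at most $r$ from $u$ (with inherited labels). The structural degree of a node $u$ is $\deg(u)+|\lambda_G(u)|$; $\mathsf{GRAPH}_\Delta$ is the set of graphs all of whose nodes have structural degree at most $\Delta$. Identifiers and certificates. An identifier assignment of $G$ is a map $\mathrm{id}:V(G)\to\{0,1\}^*$; it is $r$-locally unique if $\mathrm{id}(u)\neq\mathrm{id}(v)$ for all distinct nodes $u,v$ at distance at most $2r$. Identifiers are ordered lexicographically (a proper prefix is smaller). A certificate assignment is a map $\kappa:V(G)\to\{0,1\}^*$; for $r\in\mathbb N$ and $p:\mathbb N\to\mathbb N$ it is $(r,p)$-bounded (w.r.t. $(G,\mathrm{id})$) if $|\kappa(u)|\le p\big(\sum_{v\in N^G_r(u)}(1+|\lambda_G(v)|+|\mathrm{id}(v)|)\big)$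 for every node $u$. Distributed Turing machines. Such a machine $M$ is a Turing machine with three one-way-infinite tapes (receiving, internal, sending) over the alphabet $\{\vdash,\square,\#,0,1\}$ (left-end marker, blank, separator, bits), with designated states start, pause, stop. It is executed on a graph $G$ under an (at least $1$-locally unique) identifier assignment $\mathrm{id}$ and a certificate assignment $\kappa$: every node runs its own copy of $M$ in synchronous rounds. In each round, a node $u$ whose neighbors are $v_1,\dots,v_d$ in increasing identifier order (i) gets $m_1\#\cdots\#m_d\#$ on its receiving tape, where $m_i$ is the message sent to it by $v_i$ in the previous round (empty in the first round); (ii) its sending tape is emptied, its internal tape is initialized to $\lambda_G(u)\#\mathrm{id}(u)\#\kappa(u)$ in the first round and otherwise keeps its content, and, unless $u$ reached stop in an earlier round, $M$ runs from state start with all heads leftmost until it enters pause or stop; (iii) $u$ sends to $v_i$ the $i$-th $\#$-separated bit string on its sending tape (the empty string if there is none). The execution terminates once all nodes are in stop. The result $M(G,\mathrm{id},\kappa)$ is $G$ relabeled so that each node gets the bit string on its internal tape (other symbols ignored); $G$ is accepted, written $M(G,\mathrm{id},\kappa)\equiv\mathrm{accept}$, if every node's resulting label is the string $1$. A local-polynomial machine is a distributed Turing machine for which there are a constant $c$ and a polynomial $q$ such that, on every graph and under all identifier and certificate assignments, all nodes reach stop within $c$ rounds, and in every round every node makes at most $q(n)$ computation steps, $n$ being the total length of its receiving- and internal-tape contents at the beginning of the round. Classes. $\mathrm{LP}$ is the class of graph properties $P$ for which there are a local-polynomial machine $M$ and a constant $r_{\mathrm{id}}\ge1$ such that for every graph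 $G$ and every $r_{\mathrm{id}}$-locally unique identifier assignment $\mathrm{id}$, $M$ accepts $G$ under $\mathrm{id}$ (with empty certificates) iff $G\in P$. $\mathrm{NLP}$ is the class of graph properties $P$ for which there exist a local-polynomial machine $M$, constants $r_{\mathrm{id}},r\ge 1$ and a polynomial $p$ such that for every graph $G$ and every $r_{\mathrm{id}}$-locally unique identifier assignment $\mathrm{id}$ of $G$: $G\in P\iff\exists\kappa\,:\,M(G,\mathrm{id},\kappa)\equiv\mathrm{accept}$, $\kappa$ ranging over $(r,p)$-bounded certificate assignments of $(G,\mathrm{id})$. $\mathrm{coLP}=\{\overline P:P\in\mathrm{LP}\}$. *)

theory Defs
  imports "HOL-Computational_Algebra.Polynomial"
begin

section \<open>Labeled graphs\<close>

text \<open>Nodes are natural numbers (every finite graph is isomorphic to one of this form,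
and all properties considered are closed under isomorphism).  Edges are a symmetric,
irreflexive relation on the node set; labels outside the node set are fixed to the empty
string so that a graph has a canonical representation.\<close>

record lgraph =
  V :: "nat set"
  E :: "(nat \<times> nat) set"
  lab :: "nat \<Rightarrow> bool list"

fun dist_le :: "lgraph \<Rightarrow> nat \<Rightarrow> nat \<Rightarrow> nat \<Rightarrow> bool" where
  "dist_le G 0 u v \<longleftrightarrow> u = v \<and> u \<in> V G"
| "dist_le G (Suc k) u v \<longleftrightarrow> dist_le G k u v \<or> (\<exists>w. dist_le G k u w \<and> (w, v) \<in> E G)"

definition is_graph :: "lgraph \<Rightarrow> bool" where
  "is_graph G \<longleftrightarrow> finite (V G) \<and> V G \<noteq> {} \<and> E G \<subseteq> V G \<times> V G
     \<and> (\<forall>u v. (u, v) \<in> E G \<longrightarrow> (v, u) \<in> E G) \<and> (\<forall>u. (u, u) \<notin> E G)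
     \<and> (\<forall>v. v \<notin> V G \<longrightarrow> lab G v = [])
     \<and> (\<forall>u\<in>V G. \<forall>v\<in>V G. \<exists>k. dist_le G k u v)"

definition GRAPH :: "lgraph set" where
  "GRAPH = {G. is_graph G}"

definition graph_iso :: "lgraph \<Rightarrow> lgraph \<Rightarrow> bool" where
  "graph_iso G H \<longleftrightarrow> (\<exists>f. bij_betw f (V G) (V H)
      \<and> (\<forall>u\<in>V G. \<forall>v\<in>V G. (u, v) \<in> E G \<longleftrightarrow> (f u, f v) \<in> E H)
      \<and> (\<forall>u\<in>V G. lab H (f u) = lab G u))"

definition graph_property :: "lgraph set \<Rightarrow> bool" where
  "graph_property P \<longleftrightarrow> P \<subseteq> GRAPH \<and> (\<forall>G\<in>P. \<forall>H\<in>GRAPH. graph_iso G H \<longrightarrow> H \<in> P)"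

definition nbrs :: "lgraph \<Rightarrow> nat \<Rightarrow> nat set" where
  "nbrs G u = {v. (u, v) \<in> E G}"

definition GRAPH_deg :: "nat \<Rightarrow> lgraph set" where
  "GRAPH_deg D = {G \<in> GRAPH. \<forall>u\<in>V G. card (nbrs G u) + length (lab G u) \<le> D}"

definition restrict_class :: "lgraph set set \<Rightarrow> lgraph set \<Rightarrow> lgraph set set" where
  "restrict_class C B = {P \<inter> B | P. P \<in> C}"

section \<open>Identifiers and certificates\<close>

definition loc_unique :: "lgraph \<Rightarrow> nat \<Rightarrow> (nat \<Rightarrow> bool list) \<Rightarrow> bool" where
  "loc_unique G r ident \<longleftrightarrow>
     (\<forall>u\<in>V G. \<forall>v\<in>V G. u \<noteq> v \<and> dist_le G (2 * r) u v \<longrightarrow> ident u \<noteq> ident v)"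

text \<open>Lexicographic order on bit strings (0 < 1, a proper prefix is smaller).\<close>
definition id_less :: "bool list \<Rightarrow> bool list \<Rightarrow> bool" where
  "id_less a b \<longleftrightarrow> (a, b) \<in> lexord {(x, y). x < y}"

definition bounded_cert :: "lgraph \<Rightarrow> (nat \<Rightarrow> bool list) \<Rightarrow> nat \<Rightarrow> nat poly
     \<Rightarrow> (nat \<Rightarrow> bool list) \<Rightarrow> bool" where
  "bounded_cert G ident r p \<kappa> \<longleftrightarrow>
     (\<forall>u\<in>V G. length (\<kappa> u) \<le>
        poly p (\<Sum>v\<in>{v. dist_le G r u v}. 1 + length (lab G v) + length (ident v)))"

section \<open>Distributed Turing machines\<close>

datatype tsym = LEnd | Blank | Sep | Zero | One
datatype move = MoveL | MoveR | MoveS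

record dtm =
  Q :: "nat set"
  delta :: "nat \<Rightarrow> tsym \<Rightarrow> tsym \<Rightarrow> tsym \<Rightarrow> nat \<times> (tsym \<times> tsym \<times> tsym) \<times> (move \<times> move \<times> move)"
  q_start :: nat
  q_pause :: nat
  q_stop :: nat

definition wf_dtm :: "dtm \<Rightarrow> bool" where
  "wf_dtm M \<longleftrightarrow> finite (Q M) \<and> q_start M \<in> Q M \<and> q_pause M \<in> Q M \<and> q_stop M \<in> Q M
     \<and> q_start M \<noteq> q_pause M \<and> q_start M \<noteq> q_stop M \<and> q_pause M \<noteq> q_stop M
     \<and> (\<forall>q\<in>Q M. \<forall>a b c. fst (delta M q a b c) \<in> Q M)"

text \<open>A tape is the list of cells 1,2,...; cell 0 permanently holds the left-end marker;
cells beyond the list are blank.\<close>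
definition tread :: "tsym list \<Rightarrow> nat \<Rightarrow> tsym" where
  "tread t i = (if i = 0 then LEnd else if i \<le> length t then t ! (i - 1) else Blank)"

definition twrite :: "tsym list \<Rightarrow> nat \<Rightarrow> tsym \<Rightarrow> tsym list" where
  "twrite t i a = (if i = 0 then t else (t @ replicate (i - length t) Blank)[i - 1 := a])"

definition hmove :: "move \<Rightarrow> nat \<Rightarrow> nat" where
  "hmove m i = (case m of MoveL \<Rightarrow> i - 1 | MoveR \<Rightarrow> Suc i | MoveS \<Rightarrow> i)"

record cfg =
  cst :: nat
  rtape :: "tsym list"
  itape :: "tsym list"
  stape :: "tsym list"
  rhd :: nat
  ihd :: nat
  shd :: nat

definition halted :: "dtm \<Rightarrow> cfg \<Rightarrow> bool" where
  "halted M c \<longleftrightarrow> cst c = q_pause M \<or> cst c = q_stop M"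

definition tm_step :: "dtm \<Rightarrow> cfg \<Rightarrow> cfg" where
  "tm_step M c = (if halted M c then c else
     (case delta M (cst c) (tread (rtape c) (rhd c)) (tread (itape c) (ihd c)) (tread (stape c) (shd c)) of
       (q', (a1, a2, a3), (m1, m2, m3)) \<Rightarrow>
         \<lparr>cst = q', rtape = twrite (rtape c) (rhd c) a1, itape = twrite (itape c) (ihd c) a2,
          stape = twrite (stape c) (shd c) a3,
          rhd = hmove m1 (rhd c), ihd = hmove m2 (ihd c), shd = hmove m3 (shd c)\<rparr>))"

definition tm_steps :: "dtm \<Rightarrow> nat \<Rightarrow> cfg \<Rightarrow> cfg" where
  "tm_steps M n c = (tm_step M ^^ n) c"

definition tm_run :: "dtm \<Rightarrow> cfg \<Rightarrow> cfg option" where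
  "tm_run M c = (if \<exists>n. halted M (tm_steps M n c)
      then Some (tm_steps M (LEAST n. halted M (tm_steps M n c)) c) else None)"

definition round_cfg :: "dtm \<Rightarrow> tsym list \<Rightarrow> tsym list \<Rightarrow> cfg" where
  "round_cfg M r i = \<lparr>cst = q_start M, rtape = r, itape = i, stape = [], rhd = 0, ihd = 0, shd = 0\<rparr>"

definition tcontent :: "tsym list \<Rightarrow> tsym list" where
  "tcontent t = rev (dropWhile (\<lambda>x. x = Blank) (rev t))"

fun splitsep :: "tsym list \<Rightarrow> tsym list list" where
  "splitsep [] = [[]]"
| "splitsep (x # xs) = (if x = Sep then [] # splitsep xs
      else (let r = splitsep xs in (x # hd r) # tl r))"

definition bitsof :: "tsym list \<Rightarrow> bool list" where
  "bitsof s = concat (map (\<lambda>x. case x of Zero \<Rightarrow> [False] | One \<Rightarrow> [True] | _ \<Rightarrow> []) s)"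

definition enc :: "bool list \<Rightarrow> tsym list" where
  "enc b = map (\<lambda>x. if x then One else Zero) b"

definition piece :: "tsym list \<Rightarrow> nat \<Rightarrow> bool list" where
  "piece t i = (let ps = splitsep (tcontent t) in if i < length ps then bitsof (ps ! i) else [])"

definition nbr_list :: "lgraph \<Rightarrow> (nat \<Rightarrow> bool list) \<Rightarrow> nat \<Rightarrow> nat list" where
  "nbr_list G ident u = (THE vs. set vs = nbrs G u \<and> sorted_wrt (\<lambda>a b. id_less (ident a) (ident b)) vs)"

definition nbr_index :: "lgraph \<Rightarrow> (nat \<Rightarrow> bool list) \<Rightarrow> nat \<Rightarrow> nat \<Rightarrow> nat" where
  "nbr_index G ident v u = (THE j. j < length (nbr_list G ident v) \<and> nbr_list G ident v ! j = u)"

record nstate =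
  n_int :: "tsym list"
  n_send :: "tsym list"
  n_stopped :: bool

text \<open>Message sent by v to u (computed from v's sending tape in the previous round).\<close>
definition message :: "lgraph \<Rightarrow> (nat \<Rightarrow> bool list) \<Rightarrow> (nat \<Rightarrow> nstate) \<Rightarrow> nat \<Rightarrow> nat \<Rightarrow> bool list" where
  "message G ident s v u = piece (n_send (s v)) (nbr_index G ident v u)"

definition received :: "lgraph \<Rightarrow> (nat \<Rightarrow> bool list) \<Rightarrow> (nat \<Rightarrow> nstate) \<Rightarrow> nat \<Rightarrow> tsym list" where
  "received G ident s u = concat (map (\<lambda>v. enc (message G ident s v u) @ [Sep]) (nbr_list G ident u))"

definition init_state :: "lgraph \<Rightarrow> (nat \<Rightarrow> bool list) \<Rightarrow> (nat \<Rightarrow> bool list) \<Rightarrow> nat \<Rightarrow> nstate" where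
  "init_state G ident \<kappa> u =
     \<lparr>n_int = enc (lab G u) @ [Sep] @ enc (ident u) @ [Sep] @ enc (\<kappa> u), n_send = [], n_stopped = False\<rparr>"

definition node_round :: "dtm \<Rightarrow> lgraph \<Rightarrow> (nat \<Rightarrow> bool list) \<Rightarrow> (nat \<Rightarrow> nstate) \<Rightarrow> nat \<Rightarrow> nstate option" where
  "node_round M G ident s u =
     (if n_stopped (s u) then Some \<lparr>n_int = n_int (s u), n_send = [], n_stopped = True\<rparr>
      else (case tm_run M (round_cfg M (received G ident s u) (n_int (s u))) of
              None \<Rightarrow> None
            | Some c \<Rightarrow> Some \<lparr>n_int = itape c, n_send = stape c, n_stopped = (cst c = q_stop M)\<rparr>))"

definition do_round :: "dtm \<Rightarrow> lgraph \<Rightarrow> (nat \<Rightarrow> bool list) \<Rightarrow> (nat \<Rightarrow> nstate) \<Rightarrow> (nat \<Rightarrow> nstate) option" where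
  "do_round M G ident s =
     (if \<forall>u\<in>V G. node_round M G ident s u \<noteq> None
      then Some (\<lambda>u. if u \<in> V G then the (node_round M G ident s u) else s u) else None)"

fun exec :: "dtm \<Rightarrow> lgraph \<Rightarrow> (nat \<Rightarrow> bool list) \<Rightarrow> (nat \<Rightarrow> bool list) \<Rightarrow> nat \<Rightarrow> (nat \<Rightarrow> nstate) option" where
  "exec M G ident \<kappa> 0 = Some (init_state G ident \<kappa>)"
| "exec M G ident \<kappa> (Suc k) = (case exec M G ident \<kappa> k of None \<Rightarrow> None | Some s \<Rightarrow> do_round M G ident s)"

text \<open>M(G,id,kappa) = accept: the execution terminates and every node's resulting label is 1.\<close>
definition accepts :: "dtm \<Rightarrow> lgraph \<Rightarrow> (nat \<Rightarrow> bool list) \<Rightarrow> (nat \<Rightarrow> bool list) \<Rightarrow> bool" where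
  "accepts M G ident \<kappa> \<longleftrightarrow> (\<exists>k s. exec M G ident \<kappa> k = Some s \<and> (\<forall>u\<in>V G. n_stopped (s u))
      \<and> (\<forall>u\<in>V G. bitsof (n_int (s u)) = [True]))"

definition local_poly :: "dtm \<Rightarrow> bool" where
  "local_poly M \<longleftrightarrow> wf_dtm M \<and> (\<exists>c (q :: nat poly). \<forall>G\<in>GRAPH. \<forall>ident \<kappa>. loc_unique G 1 ident \<longrightarrow>
      (\<forall>k<c. \<exists>s. exec M G ident \<kappa> k = Some s \<and>
         (\<forall>u\<in>V G. \<not> n_stopped (s u) \<longrightarrow>
            (\<exists>n \<le> poly q (length (tcontent (received G ident s u)) + length (tcontent (n_int (s u)))).
               halted M (tm_steps M n (round_cfg M (received G ident s u) (n_int (s u)))))))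
      \<and> (\<exists>s. exec M G ident \<kappa> c = Some s \<and> (\<forall>u\<in>V G. n_stopped (s u))))"

definition LP :: "lgraph set set" where
  "LP = {P. graph_property P \<and> (\<exists>M r_id. local_poly M \<and> r_id \<ge> 1 \<and>
      (\<forall>G\<in>GRAPH. \<forall>ident. loc_unique G r_id ident \<longrightarrow> (accepts M G ident (\<lambda>_. []) \<longleftrightarrow> G \<in> P)))}"

definition NLP :: "lgraph set set" where
  "NLP = {P. graph_property P \<and> (\<exists>M r_id r (p :: nat poly). local_poly M \<and> r_id \<ge> 1 \<and> r \<ge> 1 \<and>
      (\<forall>G\<in>GRAPH. \<forall>ident. loc_unique G r_id ident \<longrightarrow>
         (G \<in> P \<longleftrightarrow> (\<exists>\<kappa>. bounded_cert G ident r p \<kappa> \<and> accepts M G ident \<kappa>))))}"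

definition coLP :: "lgraph set set" where
  "coLP = {GRAPH - P | P. P \<in> LP}"

end

theory Submission
  imports Defs "HOL-Library.List_Lexorder"
begin

definition Mdelta :: "nat \<Rightarrow> tsym \<Rightarrow> tsym \<Rightarrow> tsym \<Rightarrow> nat \<times> (tsym \<times> tsym \<times> tsym) \<times> (move \<times> move \<times> move)" where
  "Mdelta q a b c =
    (if q = 0 then (3, (a, b, c), (MoveS, MoveR, MoveS))
     else if q = 3 then (4, (a, if b = Sep then One else Zero, c), (MoveS, MoveR, MoveS))
     else if q = 4 then (if b = Blank then (2, (a, b, c), (MoveS, MoveS, MoveS))
                         else (4, (a, Blank, c), (MoveS, MoveR, MoveS)))
     else (2, (a, b, c), (MoveS, MoveS, MoveS)))"

definition M0 :: dtm where
  "M0 = \<lparr>Q = {0,1,2,3,4}, delta = Mdelta, q_start = 0, q_pause = 1, q_stop = 2\<rparr>"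

lemma M0_simps: "q_start M0 = 0" "q_pause M0 = 1" "q_stop M0 = 2" "delta M0 = Mdelta"
  by (simp_all add: M0_def)

lemma wf_M0: "wf_dtm M0"
  by (auto simp: wf_dtm_def M0_def Mdelta_def)

lemma tm_steps_halted: "halted M c \<Longrightarrow> tm_steps M n c = c"
  by (induction n) (auto simp: tm_steps_def tm_step_def)

lemma tm_run_halted:
  assumes "halted M (tm_steps M n c)"
  shows "tm_run M c = Some (tm_steps M n c)"
proof -
  let ?l = "LEAST n. halted M (tm_steps M n c)"
  have h: "halted M (tm_steps M ?l c)" by (rule LeastI[of _ n]) (fact assms)
  have "?l \<le> n" by (rule Least_le) (fact assms)
  then have e: "n = (n - ?l) + ?l" by simp
  have "tm_steps M n c = tm_steps M (n - ?l) (tm_steps M ?l c)"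
    by (subst e) (simp only: tm_steps_def funpow_add comp_apply)
  also have "\<dots> = tm_steps M ?l c" using h by (rule tm_steps_halted)
  finally show ?thesis using assms by (auto simp: tm_run_def)
qed

definition cfgE :: "tsym list \<Rightarrow> tsym \<Rightarrow> tsym list \<Rightarrow> nat \<Rightarrow> cfg" where
  "cfgE R x T j = \<lparr>cst = 4, rtape = R, itape = x # replicate j Blank @ drop (j+1) T, stape = [],
      rhd = 0, ihd = j + 2, shd = 0\<rparr>"

lemma upd_lemma:
  assumes "j + 1 < length T"
  shows "(x # replicate j Blank @ drop (j+1) T)[j+1 := Blank] = x # replicate (Suc j) Blank @ drop (j+2) T"
proof -
  have "drop (j+1) T = T!(j+1) # drop (j+2) T" using assms
    by (metis Cons_nth_drop_Suc add_2_eq_Suc' Suc_eq_plus1)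
  then show ?thesis by (simp add: list_update_append replicate_append_same[symmetric])
qed

lemma step_E:
  assumes nb: "\<forall>x\<in>set T. x \<noteq> Blank" and j: "j + 1 < length T"
  shows "tm_step M0 (cfgE R x T j) = cfgE R x T (Suc j)"
proof -
  have len: "length (x # replicate j Blank @ drop (j+1) T) = length T" using j by simp
  have rd: "tread (x # replicate j Blank @ drop (j+1) T) (j+2) = T!(j+1)"
    using j by (auto simp add: tread_def nth_append)
  have nbl: "T!(j+1) \<noteq> Blank" using nb j by auto
  show ?thesis using j len rd nbl upd_lemma[OF j, of x]
    by (simp add: tm_step_def cfgE_def halted_def M0_def Mdelta_def tread_def twrite_def hmove_def)
qed

lemma loop_E:
  assumes nb: "\<forall>x\<in>set T. x \<noteq> Blank"
  shows "j + d + 1 = length T \<Longrightarrow> tm_steps M0 d (cfgE R x T j) = cfgE R x T (j + d)"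
proof (induction d arbitrary: j)
  case 0 then show ?case by (simp add: tm_steps_def)
next
  case (Suc d)
  have "tm_steps M0 (Suc d) (cfgE R x T j) = tm_steps M0 d (tm_step M0 (cfgE R x T j))"
    by (simp only: tm_steps_def funpow_Suc_right comp_def)
  also have "tm_step M0 (cfgE R x T j) = cfgE R x T (Suc j)"
    using step_E[OF nb] Suc.prems by simp
  also have "tm_steps M0 d (cfgE R x T (Suc j)) = cfgE R x T (Suc j + d)"
    using Suc.IH[of "Suc j"] Suc.prems by simp
  finally show ?case by simp
qed

lemma upd_rep: "(replicate k Blank)[i := Blank] = replicate k Blank"
  by (induction k arbitrary: i) (auto split: nat.split)

definition finE :: "tsym list \<Rightarrow> tsym \<Rightarrow> tsym list \<Rightarrow> cfg" where
  "finE R x T = \<lparr>cst = 2, rtape = R, itape = x # replicate (length T) Blank, stape = [],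
      rhd = 0, ihd = length T + 1, shd = 0\<rparr>"

lemma run_M0:
  assumes nb: "\<forall>x\<in>set T. x \<noteq> Blank" and ne: "T \<noteq> []"
  shows "tm_steps M0 (length T + 2) (round_cfg M0 R T) = finE R (if hd T = Sep then One else Zero) T"
proof -
  let ?x = "if hd T = Sep then One else Zero"
  obtain b U where T: "T = b # U" using ne by (cases T) auto
  have s1: "tm_step M0 (round_cfg M0 R T) = \<lparr>cst = 3, rtape = R, itape = T, stape = [], rhd = 0, ihd = 1, shd = 0\<rparr>"
    by (simp add: tm_step_def round_cfg_def halted_def M0_def Mdelta_def tread_def twrite_def hmove_def)
  have s2: "tm_step M0 \<lparr>cst = 3, rtape = R, itape = T, stape = [], rhd = 0, ihd = 1, shd = 0\<rparr> = cfgE R ?x T 0"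
    using T by (simp add: tm_step_def cfgE_def halted_def M0_def Mdelta_def tread_def twrite_def hmove_def)
  have s3: "tm_steps M0 (length T - 1) (cfgE R ?x T 0) = cfgE R ?x T (length T - 1)"
    using loop_E[OF nb, of 0 "length T - 1"] ne by simp
  obtain k where k: "length T = Suc k" using ne by (cases T) auto
  have s4: "tm_step M0 (cfgE R ?x T (length T - 1)) = finE R ?x T"
    using k by (simp add: tm_step_def cfgE_def finE_def halted_def M0_def Mdelta_def tread_def twrite_def hmove_def
      replicate_append_same upd_rep replicate_Suc[symmetric] replicate_add[symmetric] del: replicate_Suc)
  have e: "length T + 2 = 1 + ((length T - 1) + 2)" using ne by simp
  have "tm_steps M0 (length T + 2) (round_cfg M0 R T) =
      (tm_step M0 ^^ 1) ((tm_step M0 ^^ (length T - 1)) ((tm_step M0 ^^ 2) (round_cfg M0 R T)))"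
    unfolding tm_steps_def by (subst e) (simp only: funpow_add comp_apply)
  then show ?thesis using s1 s2 s3 s4 by (simp add: numeral_2_eq_2 tm_steps_def)
qed

lemma exec_stable:
  assumes "exec M G i \<kappa> a = Some s" "\<forall>u\<in>V G. n_stopped (s u)"
  shows "\<exists>s'. exec M G i \<kappa> (a + j) = Some s' \<and> (\<forall>u\<in>V G. n_stopped (s' u) \<and> n_int (s' u) = n_int (s u))"
proof (induction j)
  case 0 then show ?case using assms by auto
next
  case (Suc j)
  then obtain s' where s': "exec M G i \<kappa> (a + j) = Some s'"
    "\<forall>u\<in>V G. n_stopped (s' u) \<and> n_int (s' u) = n_int (s u)" by blast
  have nr: "\<forall>u\<in>V G. node_round M G i s' u = Some \<lparr>n_int = n_int (s' u), n_send = [], n_stopped = True\<rparr>"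
    using s'(2) by (simp add: node_round_def)
  then have "do_round M G i s' = Some (\<lambda>u. if u \<in> V G then the (node_round M G i s' u) else s' u)"
    by (simp add: do_round_def)
  then show ?case using s' nr by (auto simp: do_round_def)
qed

lemma enc_nb: "\<forall>x\<in>set (enc b). x \<noteq> Blank"
  by (auto simp: enc_def)

lemma bitsof_fin: "bitsof (x # replicate n Blank) = bitsof [x]"
  by (induction n) (auto simp: bitsof_def)

definition Tof :: "lgraph \<Rightarrow> (nat \<Rightarrow> bool list) \<Rightarrow> (nat \<Rightarrow> bool list) \<Rightarrow> nat \<Rightarrow> tsym list" where
  "Tof G i \<kappa> u = enc (lab G u) @ [Sep] @ enc (i u) @ [Sep] @ enc (\<kappa> u)"

definition xof :: "lgraph \<Rightarrow> nat \<Rightarrow> tsym" where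
  "xof G u = (if lab G u = [] then One else Zero)"

lemma Tof_props: "\<forall>x\<in>set (Tof G i \<kappa> u). x \<noteq> Blank" "Tof G i \<kappa> u \<noteq> []"
  "(if hd (Tof G i \<kappa> u) = Sep then One else Zero) = xof G u"
  by (auto simp: Tof_def enc_def xof_def neq_Nil_conv split: if_splits)

lemma node_round_M0:
  "node_round M0 G i (init_state G i \<kappa>) u =
     Some \<lparr>n_int = xof G u # replicate (length (Tof G i \<kappa> u)) Blank, n_send = [], n_stopped = True\<rparr>"
proof -
  have ni: "n_int (init_state G i \<kappa> u) = Tof G i \<kappa> u" by (simp add: init_state_def Tof_def)
  have r: "tm_steps M0 (length (Tof G i \<kappa> u) + 2) (round_cfg M0 (received G i (init_state G i \<kappa>) u) (Tof G i \<kappa> u))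
     = finE (received G i (init_state G i \<kappa>) u) (xof G u) (Tof G i \<kappa> u)"
    unfolding Tof_props(3)[of G i \<kappa> u, symmetric] by (rule run_M0[OF Tof_props(1,2)])
  have h: "halted M0 (finE R x T)" for R x T by (simp add: halted_def finE_def M0_simps)
  have tr: "tm_run M0 (round_cfg M0 (received G i (init_state G i \<kappa>) u) (Tof G i \<kappa> u))
     = Some (finE (received G i (init_state G i \<kappa>) u) (xof G u) (Tof G i \<kappa> u))"
  proof -
    have hh: "halted M0 (tm_steps M0 (length (Tof G i \<kappa> u) + 2) (round_cfg M0 (received G i (init_state G i \<kappa>) u) (Tof G i \<kappa> u)))"
      unfolding r by (rule h)
    show ?thesis unfolding tm_run_halted[OF hh] r ..
  qed
  show ?thesis using tr ni
    by (simp add: node_round_def init_state_def finE_def M0_simps)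
qed

lemma exec1_M0:
  "exec M0 G i \<kappa> 1 = Some (\<lambda>u. if u \<in> V G then
      \<lparr>n_int = xof G u # replicate (length (Tof G i \<kappa> u)) Blank, n_send = [], n_stopped = True\<rparr>
      else init_state G i \<kappa> u)"
proof -
  have "do_round M0 G i (init_state G i \<kappa>) = Some (\<lambda>u. if u \<in> V G then
      \<lparr>n_int = xof G u # replicate (length (Tof G i \<kappa> u)) Blank, n_send = [], n_stopped = True\<rparr>
      else init_state G i \<kappa> u)"
    unfolding do_round_def by (auto simp: node_round_M0 intro!: ext)
  then show ?thesis by (simp add: One_nat_def)
qed

lemma accepts_M0:
  assumes "V G \<noteq> {}"
  shows "accepts M0 G i \<kappa> \<longleftrightarrow> (\<forall>u\<in>V G. lab G u = [])"
proof
  assume "accepts M0 G i \<kappa>"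
  then obtain k s where ks: "exec M0 G i \<kappa> k = Some s" "\<forall>u\<in>V G. n_stopped (s u)"
    "\<forall>u\<in>V G. bitsof (n_int (s u)) = [True]" by (auto simp: accepts_def)
  show "\<forall>u\<in>V G. lab G u = []"
  proof (cases k)
    case 0
    then show ?thesis using ks assms by (auto simp: init_state_def)
  next
    case (Suc k')
    obtain s' where s': "exec M0 G i \<kappa> (1 + k') = Some s'"
      "\<forall>u\<in>V G. n_stopped (s' u) \<and> n_int (s' u) = xof G u # replicate (length (Tof G i \<kappa> u)) Blank"
      using exec_stable[OF exec1_M0, of G i \<kappa> k'] by auto
    have "s' = s" using s' ks Suc by simp
    then show ?thesis using s' ks by (auto simp: bitsof_fin bitsof_def xof_def split: if_splits)
  qed
next
  assume "\<forall>u\<in>V G. lab G u = []"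
  then show "accepts M0 G i \<kappa>"
  proof -
    let ?S = "(\<lambda>u. if u \<in> V G then
      \<lparr>n_int = xof G u # replicate (length (Tof G i \<kappa> u)) Blank, n_send = [], n_stopped = True\<rparr>
      else init_state G i \<kappa> u)"
    have "exec M0 G i \<kappa> 1 = Some ?S \<and> (\<forall>u\<in>V G. n_stopped (?S u)) \<and> (\<forall>u\<in>V G. bitsof (n_int (?S u)) = [True])"
      using \<open>\<forall>u\<in>V G. lab G u = []\<close>
      by (intro conjI exec1_M0) (auto simp: bitsof_fin bitsof_def xof_def)
    then show ?thesis unfolding accepts_def by blast
  qed
qed

lemma tcontent_nb: "\<forall>x\<in>set t. x \<noteq> Blank \<Longrightarrow> tcontent t = t"
  by (simp add: tcontent_def dropWhile_eq_self_iff) (cases "rev t"; auto)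

lemma M0_halt:
  "halted M0 (tm_steps M0 (length (Tof G i \<kappa> u) + 2) (round_cfg M0 R (Tof G i \<kappa> u)))"
  by (simp only: run_M0[OF Tof_props(1,2)]) (simp add: halted_def finE_def M0_simps)

lemma local_poly_M0: "local_poly M0"
  unfolding local_poly_def
  apply (rule conjI[OF wf_M0])
  apply (rule exI[of _ "1::nat"], rule exI[of _ "[:2,1:]"])
proof (intro ballI allI impI conjI)
  fix G i \<kappa> k assume "k < (1::nat)"
  then have k: "k = 0" by simp
  have ni: "n_int (init_state G i \<kappa> u) = Tof G i \<kappa> u" for u by (simp add: init_state_def Tof_def)
  have "\<forall>u\<in>V G. \<not> n_stopped (init_state G i \<kappa> u) \<longrightarrow>
      (\<exists>n\<le>poly [:2, 1:] (length (tcontent (received G i (init_state G i \<kappa>) u)) + length (tcontent (n_int (init_state G i \<kappa> u)))).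
          halted M0 (tm_steps M0 n (round_cfg M0 (received G i (init_state G i \<kappa>) u) (n_int (init_state G i \<kappa> u)))))"
  proof (intro ballI impI)
    fix u
    show "\<exists>n\<le>poly [:2, 1:] (length (tcontent (received G i (init_state G i \<kappa>) u)) + length (tcontent (n_int (init_state G i \<kappa> u)))).
          halted M0 (tm_steps M0 n (round_cfg M0 (received G i (init_state G i \<kappa>) u) (n_int (init_state G i \<kappa> u))))"
      unfolding ni
      by (rule exI[of _ "length (Tof G i \<kappa> u) + 2"], rule conjI, simp add: tcontent_nb[OF Tof_props(1)], rule M0_halt)
  qed
  then show "\<exists>s. exec M0 G i \<kappa> k = Some s \<and> (\<forall>u\<in>V G. \<not> n_stopped (s u) \<longrightarrow>
      (\<exists>n\<le>poly [:2, 1:] (length (tcontent (received G i s u)) + length (tcontent (n_int (s u)))).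
          halted M0 (tm_steps M0 n (round_cfg M0 (received G i s u) (n_int (s u))))))"
    using k by simp
next
  fix G i \<kappa>
  show "\<exists>s. exec M0 G i \<kappa> 1 = Some s \<and> (\<forall>u\<in>V G. n_stopped (s u))"
    by (rule exI, rule conjI, rule exec1_M0, simp)
qed

lemma id_less_iff: "id_less a b \<longleftrightarrow> a < b"
  by (simp add: id_less_def list_less_def)

lemma sorted_id_iff: "sorted_wrt (\<lambda>a b. id_less (i a) (i b)) L \<longleftrightarrow> sorted_wrt (<) (map i L)"
  by (simp add: sorted_wrt_map id_less_iff)

lemma sorted_unique:
  assumes "inj_on i S" "set vs = S" "set ws = S"
    "sorted_wrt (\<lambda>a b. id_less (i a) (i b)) vs" "sorted_wrt (\<lambda>a b. id_less (i a) (i b)) ws"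
  shows "vs = ws"
proof -
  have "map i vs = map i ws"
    using assms by (intro strict_sorted_equal) (auto simp: sorted_id_iff)
  then show ?thesis using assms(1-3) by (simp add: inj_on_map_eq_map)
qed

lemma sorted_exists:
  assumes "finite S" "inj_on i S"
  shows "\<exists>vs. set vs = S \<and> sorted_wrt (\<lambda>a b. id_less (i a) (i b)) vs"
proof -
  let ?ws = "sorted_list_of_set (i ` S)"
  let ?vs = "map (the_inv_into S i) ?ws"
  have sw: "set ?ws = i ` S" using assms by simp
  have mv: "map i ?vs = ?ws" using sw assms(2)
    by (auto simp: map_idI f_the_inv_into_f intro!: map_idI)
  have "set ?vs = S" using sw assms(2) by (auto simp: the_inv_into_f_f image_image)
  moreover have "sorted_wrt (\<lambda>a b. id_less (i a) (i b)) ?vs"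
    unfolding sorted_id_iff mv by (rule strict_sorted_list_of_set)
  ultimately show ?thesis by blast
qed

lemma nbr_list_props:
  assumes "finite (nbrs G u)" "inj_on i (nbrs G u)"
  shows "set (nbr_list G i u) = nbrs G u \<and> sorted_wrt (\<lambda>a b. id_less (i a) (i b)) (nbr_list G i u)"
proof -
  obtain vs where vs: "set vs = nbrs G u \<and> sorted_wrt (\<lambda>a b. id_less (i a) (i b)) vs"
    using sorted_exists[OF assms] by blast
  show ?thesis unfolding nbr_list_def
    by (rule theI[of _ vs]) (use vs sorted_unique[OF assms(2)] in blast)+
qed

lemma nbr_list_eq:
  assumes "finite (nbrs G u)" "inj_on i (nbrs G u)" "set vs = nbrs G u"
    "sorted_wrt (\<lambda>a b. id_less (i a) (i b)) vs"
  shows "nbr_list G i u = vs"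
  using nbr_list_props[OF assms(1,2)] sorted_unique[OF assms(2)] assms(3,4) by blast

lemma graph_nbrs_finite: "is_graph G \<Longrightarrow> finite (nbrs G u)"
  unfolding is_graph_def nbrs_def by (auto intro: finite_subset)

lemma nbrs_sym: "is_graph G \<Longrightarrow> v \<in> nbrs G u \<Longrightarrow> u \<in> nbrs G v"
  unfolding is_graph_def nbrs_def by auto

lemma nbrs_V: "is_graph G \<Longrightarrow> v \<in> nbrs G u \<Longrightarrow> v \<in> V G \<and> u \<in> V G"
  unfolding is_graph_def nbrs_def by auto

lemma dist_le_mono: "dist_le G k u v \<Longrightarrow> k \<le> k' \<Longrightarrow> dist_le G k' u v"
proof (induction k' arbitrary: k)
  case 0 then show ?case by auto
next
  case (Suc k') then show ?case by (cases "k = Suc k'") auto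
qed

lemma loc_unique_mono: "loc_unique G r i \<Longrightarrow> 1 \<le> r \<Longrightarrow> loc_unique G 1 i"
  unfolding loc_unique_def using dist_le_mono[of G 2 _ _ "2*r"] by fastforce

lemma inj_nbrs:
  assumes "is_graph G" "loc_unique G 1 i"
  shows "inj_on i (nbrs G u)"
proof (rule inj_onI)
  fix a b assume ab: "a \<in> nbrs G u" "b \<in> nbrs G u" "i a = i b"
  show "a = b"
  proof (rule ccontr)
    assume "a \<noteq> b"
    have "(a, u) \<in> E G" "(u, b) \<in> E G" using ab nbrs_sym[OF assms(1)] by (auto simp: nbrs_def)
    moreover have "a \<in> V G" "b \<in> V G" using ab nbrs_V[OF assms(1)] by auto
    ultimately have "dist_le G 2 a b" by (auto simp: numeral_2_eq_2)
    then show False using assms(2) ab \<open>a \<noteq> b\<close> \<open>a \<in> V G\<close> \<open>b \<in> V G\<close>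
      unfolding loc_unique_def by auto
  qed
qed

fun compat :: "lgraph \<Rightarrow> (nat \<Rightarrow> bool list) \<Rightarrow> (nat \<Rightarrow> bool list) \<Rightarrow> lgraph \<Rightarrow> (nat \<Rightarrow> bool list)
    \<Rightarrow> (nat \<Rightarrow> bool list) \<Rightarrow> nat \<Rightarrow> nat \<Rightarrow> nat \<Rightarrow> bool" where
  "compat G1 i1 k1 G2 i2 k2 0 x y \<longleftrightarrow> x \<in> V G1 \<and> y \<in> V G2 \<and> lab G1 x = lab G2 y \<and> i1 x = i2 y \<and> k1 x = k2 y"
| "compat G1 i1 k1 G2 i2 k2 (Suc k) x y \<longleftrightarrow> compat G1 i1 k1 G2 i2 k2 k x y \<and>
     (\<exists>f. bij_betw f (nbrs G1 x) (nbrs G2 y) \<and> (\<forall>v\<in>nbrs G1 x. compat G1 i1 k1 G2 i2 k2 k v (f v)))"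

lemma compat_0: "compat G1 i1 k1 G2 i2 k2 k x y \<Longrightarrow> compat G1 i1 k1 G2 i2 k2 0 x y"
  by (induction k) auto

lemma compat_mono: "compat G1 i1 k1 G2 i2 k2 k x y \<Longrightarrow> j \<le> k \<Longrightarrow> compat G1 i1 k1 G2 i2 k2 j x y"
proof (induction k)
  case 0 then show ?case by simp
next
  case (Suc k) then show ?case by (cases "j = Suc k") auto
qed

lemma nbr_list_map:
  assumes g: "is_graph G1" "is_graph G2" "loc_unique G1 1 i1" "loc_unique G2 1 i2"
    and f: "bij_betw f (nbrs G1 x) (nbrs G2 y)" "\<forall>v\<in>nbrs G1 x. i2 (f v) = i1 v"
  shows "nbr_list G2 i2 y = map f (nbr_list G1 i1 x)"
proof -
  have p1: "set (nbr_list G1 i1 x) = nbrs G1 x" "sorted_wrt (\<lambda>a b. id_less (i1 a) (i1 b)) (nbr_list G1 i1 x)"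
    using nbr_list_props[OF graph_nbrs_finite inj_nbrs] g by blast+
  have "map i2 (map f (nbr_list G1 i1 x)) = map i1 (nbr_list G1 i1 x)"
    using f(2) p1(1) by auto
  then have "sorted_wrt (\<lambda>a b. id_less (i2 a) (i2 b)) (map f (nbr_list G1 i1 x))"
    using p1(2) by (simp only: sorted_id_iff)
  moreover have "set (map f (nbr_list G1 i1 x)) = nbrs G2 y"
    using p1(1) f(1) by (simp add: bij_betw_def)
  ultimately show ?thesis
    using nbr_list_eq[OF graph_nbrs_finite inj_nbrs] g by metis
qed

lemma piece_Nil: "piece [] j = []"
  by (simp add: piece_def tcontent_def bitsof_def)

lemma node_round_eq:
  assumes g: "is_graph G1" "is_graph G2" "loc_unique G1 1 i1" "loc_unique G2 1 i2"
    and c: "compat G1 i1 k1 G2 i2 k2 (Suc k) x y"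
    and st: "\<forall>x y. compat G1 i1 k1 G2 i2 k2 k x y \<longrightarrow> s1 x = s2 y"
    and z: "k = 0 \<Longrightarrow> (\<forall>v. n_send (s1 v) = []) \<and> (\<forall>w. n_send (s2 w) = [])"
  shows "node_round M G1 i1 s1 x = node_round M G2 i2 s2 y"
proof -
  let ?C = "compat G1 i1 k1 G2 i2 k2"
  obtain f where f: "bij_betw f (nbrs G1 x) (nbrs G2 y)" "\<forall>v\<in>nbrs G1 x. ?C k v (f v)"
    and cxy: "?C k x y" using c by auto
  have fi: "\<forall>v\<in>nbrs G1 x. i2 (f v) = i1 v" using f(2) compat_0 by fastforce
  have nl: "nbr_list G2 i2 y = map f (nbr_list G1 i1 x)" by (rule nbr_list_map[OF g f(1) fi])
  have sl: "set (nbr_list G1 i1 x) = nbrs G1 x"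
    using nbr_list_props[OF graph_nbrs_finite inj_nbrs] g by blast
  have msg: "message G1 i1 s1 v x = message G2 i2 s2 (f v) y" if v: "v \<in> nbrs G1 x" for v
  proof (cases k)
    case 0
    then show ?thesis using z by (simp add: message_def piece_Nil)
  next
    case (Suc k')
    have svw: "s1 v = s2 (f v)" using st f(2) v by blast
    obtain g where gg: "bij_betw g (nbrs G1 v) (nbrs G2 (f v))" "\<forall>u\<in>nbrs G1 v. ?C k' u (g u)"
      using f(2) v Suc by auto
    have gi: "\<forall>u\<in>nbrs G1 v. i2 (g u) = i1 u" using gg(2) compat_0 by fastforce
    have nl2: "nbr_list G2 i2 (f v) = map g (nbr_list G1 i1 v)" by (rule nbr_list_map[OF g gg(1) gi])
    have sl2: "set (nbr_list G1 i1 v) = nbrs G1 v"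
      using nbr_list_props[OF graph_nbrs_finite inj_nbrs] g by blast
    have xv: "x \<in> nbrs G1 v" using nbrs_sym[OF g(1) v] .
    have fvy: "f v \<in> nbrs G2 y" using f(1) v by (auto simp: bij_betw_def)
    have yfv: "y \<in> nbrs G2 (f v)" using nbrs_sym[OF g(2) fvy] .
    have gx: "g x \<in> nbrs G2 (f v)" using gg(1) xv by (auto simp: bij_betw_def)
    have "i2 (g x) = i2 y" using gi xv compat_0[OF cxy] by simp
    then have gxy: "g x = y" using inj_nbrs[OF g(2) g(4)] gx yfv by (auto dest: inj_onD)
    have ginj: "inj_on g (set (nbr_list G1 i1 v))" using gg(1) sl2 by (simp add: bij_betw_def)
    have "(\<lambda>j. j < length (nbr_list G2 i2 (f v)) \<and> nbr_list G2 i2 (f v) ! j = y)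
        = (\<lambda>j. j < length (nbr_list G1 i1 v) \<and> nbr_list G1 i1 v ! j = x)"
    proof (rule ext)
      fix j
      show "(j < length (nbr_list G2 i2 (f v)) \<and> nbr_list G2 i2 (f v) ! j = y)
        = (j < length (nbr_list G1 i1 v) \<and> nbr_list G1 i1 v ! j = x)"
        using ginj xv sl2 unfolding nl2 gxy[symmetric]
        apply (auto intro: nth_mem) by (metis inj_onD nth_mem)
    qed
    then have "nbr_index G2 i2 (f v) y = nbr_index G1 i1 v x" by (simp add: nbr_index_def)
    then show ?thesis using svw by (simp add: message_def)
  qed
  have "received G2 i2 s2 y = received G1 i1 s1 x"
    unfolding received_def nl map_map comp_def
    by (rule arg_cong[where f = concat], rule map_cong, rule refl) (use msg sl in simp)
  moreover have "s1 x = s2 y" using st cxy by blast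
  ultimately show ?thesis by (simp add: node_round_def)
qed

lemma simulation:
  assumes g: "is_graph G1" "is_graph G2" "loc_unique G1 1 i1" "loc_unique G2 1 i2"
    and all: "\<forall>x\<in>V G1. \<exists>y. compat G1 i1 k1 G2 i2 k2 K x y"
  shows "k \<le> K \<Longrightarrow> exec M G2 i2 k2 k = Some s2 \<Longrightarrow>
     \<exists>s1. exec M G1 i1 k1 k = Some s1 \<and> (\<forall>x y. compat G1 i1 k1 G2 i2 k2 k x y \<longrightarrow> s1 x = s2 y)"
proof (induction k arbitrary: s2)
  case 0
  then show ?case by (auto simp: init_state_def)
next
  case (Suc k)
  let ?C = "compat G1 i1 k1 G2 i2 k2"
  obtain t2 where t2: "exec M G2 i2 k2 k = Some t2" "do_round M G2 i2 t2 = Some s2"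
    using Suc.prems by (auto split: option.splits)
  obtain t1 where t1: "exec M G1 i1 k1 k = Some t1" "\<forall>x y. ?C k x y \<longrightarrow> t1 x = t2 y"
    using Suc.IH[OF _ t2(1)] Suc.prems by auto
  have z: "k = 0 \<Longrightarrow> (\<forall>v. n_send (t1 v) = []) \<and> (\<forall>w. n_send (t2 w) = [])"
    using t1(1) t2(1) by (auto simp: init_state_def)
  have ne2: "\<forall>u\<in>V G2. node_round M G2 i2 t2 u \<noteq> None"
    and s2: "s2 = (\<lambda>u. if u \<in> V G2 then the (node_round M G2 i2 t2 u) else t2 u)"
    using t2(2) by (auto simp: do_round_def split: if_splits)
  have eq: "node_round M G1 i1 t1 x = node_round M G2 i2 t2 y" if "?C (Suc k) x y" for x y
    by (rule node_round_eq[OF g that t1(2) z])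
  have ne1: "\<forall>u\<in>V G1. node_round M G1 i1 t1 u \<noteq> None"
  proof
    fix x assume x: "x \<in> V G1"
    obtain y where "?C K x y" using all x by blast
    then have cy: "?C (Suc k) x y" using compat_mono Suc.prems by blast
    then have "y \<in> V G2" using compat_0 by fastforce
    then show "node_round M G1 i1 t1 x \<noteq> None" using eq[OF cy] ne2 by simp
  qed
  let ?s1 = "\<lambda>u. if u \<in> V G1 then the (node_round M G1 i1 t1 u) else t1 u"
  have "exec M G1 i1 k1 (Suc k) = Some ?s1" using t1(1) ne1 by (simp add: do_round_def)
  moreover have "\<forall>x y. ?C (Suc k) x y \<longrightarrow> ?s1 x = s2 y"
  proof (intro allI impI)
    fix x y assume cy: "?C (Suc k) x y"
    then have "x \<in> V G1" "y \<in> V G2" using compat_0 by fastforce+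
    then show "?s1 x = s2 y" using eq[OF cy] s2 by simp
  qed
  ultimately show ?case by blast
qed

lemma accepts_at:
  assumes "accepts M G i \<kappa>" "exec M G i \<kappa> c = Some s" "\<forall>u\<in>V G. n_stopped (s u)"
  shows "\<forall>u\<in>V G. bitsof (n_int (s u)) = [True]"
proof -
  obtain k sk where k: "exec M G i \<kappa> k = Some sk" "\<forall>u\<in>V G. n_stopped (sk u)"
    "\<forall>u\<in>V G. bitsof (n_int (sk u)) = [True]" using assms(1) by (auto simp: accepts_def)
  show ?thesis
  proof (cases "k \<le> c")
    case True
    obtain s' where "exec M G i \<kappa> (k + (c - k)) = Some s'" "\<forall>u\<in>V G. n_stopped (s' u) \<and> n_int (s' u) = n_int (sk u)"
      using exec_stable[OF k(1,2)] by blast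
    then show ?thesis using True assms(2) k(3) by auto
  next
    case False
    obtain s' where "exec M G i \<kappa> (c + (k - c)) = Some s'" "\<forall>u\<in>V G. n_stopped (s' u) \<and> n_int (s' u) = n_int (s u)"
      using exec_stable[OF assms(2,3)] by blast
    then show ?thesis using False k by auto
  qed
qed

definition cadd :: "nat \<Rightarrow> nat \<Rightarrow> int \<Rightarrow> nat" where
  "cadd n u s = nat ((int u + s) mod int n)"

definition cyc :: "nat \<Rightarrow> (nat \<Rightarrow> bool list) \<Rightarrow> lgraph" where
  "cyc n L = \<lparr>V = {..<n}, E = {(a, b). a < n \<and> b < n \<and> (b = cadd n a 1 \<or> a = cadd n b 1)},
     lab = (\<lambda>u. if u < n then L u else [])\<rparr>"

lemma cadd_int: "0 < n \<Longrightarrow> int (cadd n u s) = (int u + s) mod int n"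
  by (simp add: cadd_def)

lemma cadd_lt: "0 < n \<Longrightarrow> cadd n u s < n"
  unfolding cadd_def by (simp add: nat_less_iff)

lemma cadd_0: "u < n \<Longrightarrow> cadd n u 0 = u"
  unfolding cadd_def by simp

lemma cadd_cadd: "0 < n \<Longrightarrow> cadd n (cadd n u s) t = cadd n u (s + t)"
  unfolding cadd_def by (simp add: mod_add_left_eq add.assoc)

lemma cadd_inj:
  assumes n: "0 < n" and e: "cadd n u s = cadd n u t" and st: "\<bar>s - t\<bar> < int n"
  shows "s = t"
proof (rule ccontr)
  assume ne: "s \<noteq> t"
  have "int (cadd n u s) = int (cadd n u t)" using e by simp
  then have "(int u + s) mod int n = (int u + t) mod int n" by (simp only: cadd_int[OF n])
  then have "int n dvd (int u + s) - (int u + t)" by (simp only: mod_eq_dvd_iff)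
  then have "int n dvd (s - t)" by simp
  moreover have "s - t \<noteq> 0" using ne by simp
  ultimately have "\<bar>int n\<bar> \<le> \<bar>s - t\<bar>" by (rule dvd_imp_le_int[rotated])
  then show False using st by simp
qed

lemma cyc_V [simp]: "V (cyc n L) = {..<n}" by (simp add: cyc_def)
lemma cyc_lab: "u < n \<Longrightarrow> lab (cyc n L) u = L u" by (simp add: cyc_def)

lemma cyc_nbrs:
  assumes "0 < n" "u < n"
  shows "nbrs (cyc n L) u = {cadd n u 1, cadd n u (-1)}"
proof -
  have "v = cadd n u 1 \<or> u = cadd n v 1 \<longleftrightarrow> v = cadd n u 1 \<or> v = cadd n u (-1)" if v: "v < n" for v
  proof -
    have "u = cadd n v 1 \<longleftrightarrow> v = cadd n u (-1)"
    proof
      assume "u = cadd n v 1"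
      then show "v = cadd n u (-1)" using cadd_cadd[OF assms(1)] cadd_0[OF v] by simp
    next
      assume "v = cadd n u (-1)"
      then show "u = cadd n v 1" using cadd_cadd[OF assms(1)] cadd_0[OF assms(2)] by simp
    qed
    then show ?thesis by blast
  qed
  then show ?thesis using assms cadd_lt[OF assms(1)] by (auto simp: nbrs_def cyc_def)
qed

lemma cyc_E_iff: "(a, b) \<in> E (cyc n L) \<longleftrightarrow> a < n \<and> b \<in> nbrs (cyc n L) a"
  by (auto simp: nbrs_def cyc_def)

lemma cyc_dist:
  assumes n: "0 < n"
  shows "dist_le (cyc n L) k u v \<longleftrightarrow> u < n \<and> (\<exists>s. \<bar>s\<bar> \<le> int k \<and> v = cadd n u s)"
proof (induction k arbitrary: v)
  case 0
  then show ?case using cadd_0 by auto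
next
  case (Suc k)
  show ?case
  proof
    assume "dist_le (cyc n L) (Suc k) u v"
    then consider "dist_le (cyc n L) k u v" | w where "dist_le (cyc n L) k u w" "(w, v) \<in> E (cyc n L)"
      by auto
    then show "u < n \<and> (\<exists>s. \<bar>s\<bar> \<le> int (Suc k) \<and> v = cadd n u s)"
    proof cases
      case 1 then show ?thesis using Suc.IH by force
    next
      case 2
      then obtain s where s: "u < n" "\<bar>s\<bar> \<le> int k" "w = cadd n u s" using Suc.IH by blast
      have "w < n" using s cadd_lt[OF n] by simp
      then have "v = cadd n w 1 \<or> v = cadd n w (-1)" using 2(2) cyc_nbrs[OF n] by (auto simp: cyc_E_iff)
      then have "v = cadd n u (s + 1) \<or> v = cadd n u (s + -1)" using s cadd_cadd[OF n] by auto
      moreover have "\<bar>s + 1\<bar> \<le> int (Suc k)" "\<bar>s + -1\<bar> \<le> int (Suc k)" using s(2) by auto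
      ultimately show ?thesis using s(1) by blast
    qed
  next
    assume "u < n \<and> (\<exists>s. \<bar>s\<bar> \<le> int (Suc k) \<and> v = cadd n u s)"
    then obtain s where s: "u < n" "\<bar>s\<bar> \<le> int (Suc k)" "v = cadd n u s" by blast
    show "dist_le (cyc n L) (Suc k) u v"
    proof (cases "\<bar>s\<bar> \<le> int k")
      case True then show ?thesis using Suc.IH s by auto
    next
      case False
      then have "s = int k + 1 \<or> s = - int k - 1" using s(2) by auto
      then obtain e where e: "e = 1 \<or> e = -1" "\<bar>s - e\<bar> \<le> int k"
      proof (cases "s = int k + 1")
        case True then show ?thesis using that[of 1] by simp
      next
        case False
        then have "s = - int k - 1" using \<open>s = int k + 1 \<or> s = - int k - 1\<close> by simp
        then show ?thesis using that[of "-1"] by simp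
      qed
      let ?w = "cadd n u (s - e)"
      have dw: "dist_le (cyc n L) k u ?w" using Suc.IH s e by blast
      have w: "?w < n" by (rule cadd_lt[OF n])
      have "v = cadd n ?w e" using cadd_cadd[OF n] s by simp
      then have "(?w, v) \<in> E (cyc n L)" using e(1) w cyc_nbrs[OF n w] by (auto simp: cyc_E_iff)
      then show ?thesis using dw by auto
    qed
  qed
qed

lemma cyc_ball:
  assumes "0 < n" "u < n"
  shows "{v. dist_le (cyc n L) k u v} = cadd n u ` {- int k..int k}"
  using cyc_dist[OF assms(1)] assms(2) by (auto simp: abs_le_iff)

lemma cyc_ball_sum:
  assumes "0 < n" "u < n" "2 * k < n"
  shows "(\<Sum>v\<in>{v. dist_le (cyc n L) k u v}. f v) = (\<Sum>s\<in>{- int k..int k}. f (cadd n u s))"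
proof -
  have "inj_on (cadd n u) {- int k..int k}"
    by (rule inj_onI, rule cadd_inj[OF assms(1)]) (use assms(3) in auto)
  then show ?thesis unfolding cyc_ball[OF assms(1,2)] by (simp add: sum.reindex)
qed

lemma cyc_two:
  assumes "3 \<le> n"
  shows "cadd n u 1 \<noteq> cadd n u (-1)"
  using cadd_inj[of n u 1 "-1"] assms by auto

lemma cyc_card_nbrs:
  assumes "3 \<le> n" "u < n"
  shows "card (nbrs (cyc n L) u) = 2"
  using cyc_nbrs[of n u L] assms cyc_two[OF assms(1)] by auto

lemma cyc_graph:
  assumes "3 \<le> n"
  shows "is_graph (cyc n L)"
proof -
  have n: "0 < n" using assms by simp
  have irr: "(u, u) \<notin> E (cyc n L)" for u
  proof
    assume "(u, u) \<in> E (cyc n L)"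
    then have "u < n" "u = cadd n u 1" by (auto simp: cyc_def)
    then have "cadd n u 0 = cadd n u 1" using cadd_0 by simp
    then show False using cadd_inj[OF n, of u 0 1] assms by auto
  qed
  have conn: "\<exists>k. dist_le (cyc n L) k u v" if "u < n" "v < n" for u v
  proof -
    have "cadd n u (int v - int u) = v" using that by (simp add: cadd_def)
    moreover have "\<bar>int v - int u\<bar> \<le> int n" using that by auto
    ultimately show ?thesis using cyc_dist[OF n] that by metis
  qed
  show ?thesis unfolding is_graph_def using irr conn assms
    by (auto simp: cyc_def lessThan_empty_iff)
qed

lemma cyc_compat:
  assumes n: "3 \<le> n1" "3 \<le> n2"
  shows "x < n1 \<Longrightarrow> y < n2 \<Longrightarrow> (\<forall>s. \<bar>s\<bar> \<le> int k \<longrightarrow> L1 (cadd n1 x s) = L2 (cadd n2 y s)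
      \<and> i1 (cadd n1 x s) = i2 (cadd n2 y s) \<and> k1 (cadd n1 x s) = k2 (cadd n2 y s))
    \<Longrightarrow> compat (cyc n1 L1) i1 k1 (cyc n2 L2) i2 k2 k x y"
proof (induction k arbitrary: x y)
  case 0
  then show ?case using cadd_0[of x n1] cadd_0[of y n2] by (auto simp: cyc_lab)
next
  case (Suc k)
  have p1: "0 < n1" "0 < n2" using n by auto
  have ck: "compat (cyc n1 L1) i1 k1 (cyc n2 L2) i2 k2 k x y" using Suc by auto
  let ?f = "\<lambda>v. if v = cadd n1 x 1 then cadd n2 y 1 else cadd n2 y (-1)"
  have ne1: "cadd n1 x 1 \<noteq> cadd n1 x (-1)" "cadd n2 y 1 \<noteq> cadd n2 y (-1)" using cyc_two n by auto
  have bij: "bij_betw ?f (nbrs (cyc n1 L1) x) (nbrs (cyc n2 L2) y)"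
    unfolding cyc_nbrs[OF p1(1) Suc.prems(1)] cyc_nbrs[OF p1(2) Suc.prems(2)] bij_betw_def
    using ne1 by (auto simp: inj_on_def)
  have sh: "compat (cyc n1 L1) i1 k1 (cyc n2 L2) i2 k2 k (cadd n1 x e) (cadd n2 y e)" if e: "e = 1 \<or> e = -1" for e
  proof (rule Suc.IH)
    show "cadd n1 x e < n1" "cadd n2 y e < n2" using cadd_lt p1 by auto
    show "\<forall>s. \<bar>s\<bar> \<le> int k \<longrightarrow> L1 (cadd n1 (cadd n1 x e) s) = L2 (cadd n2 (cadd n2 y e) s) \<and>
          i1 (cadd n1 (cadd n1 x e) s) = i2 (cadd n2 (cadd n2 y e) s) \<and>
          k1 (cadd n1 (cadd n1 x e) s) = k2 (cadd n2 (cadd n2 y e) s)"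
    proof (intro allI impI)
      fix s :: int assume "\<bar>s\<bar> \<le> int k"
      then have "\<bar>e + s\<bar> \<le> int (Suc k)" using e by auto
      then show "L1 (cadd n1 (cadd n1 x e) s) = L2 (cadd n2 (cadd n2 y e) s) \<and>
          i1 (cadd n1 (cadd n1 x e) s) = i2 (cadd n2 (cadd n2 y e) s) \<and>
          k1 (cadd n1 (cadd n1 x e) s) = k2 (cadd n2 (cadd n2 y e) s)"
        using Suc.prems(3) cadd_cadd p1 by simp
    qed
  qed
  have "\<forall>v\<in>nbrs (cyc n1 L1) x. compat (cyc n1 L1) i1 k1 (cyc n2 L2) i2 k2 k v (?f v)"
    unfolding cyc_nbrs[OF p1(1) Suc.prems(1)] using sh ne1 by auto
  then show ?case using ck bij by auto
qed

definition idc :: "nat \<Rightarrow> nat \<Rightarrow> bool list" where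
  "idc m u = replicate (u mod m) True"

lemma cyc_loc_unique:
  assumes n: "3 \<le> n" and m: "m dvd n" "2 * r < m"
  shows "loc_unique (cyc n L) r (idc m)"
  unfolding loc_unique_def
proof (intro ballI impI)
  fix u v assume uv: "u \<in> V (cyc n L)" "v \<in> V (cyc n L)" "u \<noteq> v \<and> dist_le (cyc n L) (2 * r) u v"
  have p: "0 < n" using n by simp
  obtain s where s: "\<bar>s\<bar> \<le> int (2 * r)" "v = cadd n u s" using uv cyc_dist[OF p] by blast
  have "s \<noteq> 0" using s uv cadd_0 by auto
  have "int v mod int m = (int u + s) mod int m"
    using s(2) cadd_int[OF p] m(1) by (simp add: mod_mod_cancel)
  show "idc m u \<noteq> idc m v"
  proof
    assume "idc m u = idc m v"
    then have "u mod m = v mod m" by (simp add: idc_def)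
    then have "int u mod int m = int v mod int m" by (metis of_nat_mod)
    then have "int u mod int m = (int u + s) mod int m" using \<open>int v mod int m = (int u + s) mod int m\<close> by simp
    then have "int m dvd (int u + s) - int u" by (metis mod_eq_dvd_iff)
    then have "int m dvd s" by simp
    then have "\<bar>int m\<bar> \<le> \<bar>s\<bar>" using \<open>s \<noteq> 0\<close> by (rule dvd_imp_le_int[rotated])
    then show False using s(1) m(2) by linarith
  qed
qed

definition A0 :: "lgraph set" where
  "A0 = {G \<in> GRAPH. \<forall>u\<in>V G. lab G u = []}"

definition B0 :: "lgraph set" where
  "B0 = GRAPH - A0"


lemma idc_eq: "int u mod int m = int v mod int m \<Longrightarrow> idc m u = idc m v"
  unfolding idc_def by (metis nat_int of_nat_mod)

lemma mod_range_int: "0 \<le> a - k * n \<Longrightarrow> a - k * n < n \<Longrightarrow> (a::int) mod n = a - k * n"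
proof -
  assume h: "0 \<le> a - k * n" "a - k * n < n"
  have "a mod n = ((a - k * n) + k * n) mod n" by simp
  also have "\<dots> = (a - k * n) mod n" by (rule mod_mult_self1)
  also have "\<dots> = a - k * n" using h by (rule mod_pos_pos_trivial)
  finally show ?thesis .
qed

lemma key:
  assumes D: "3 \<le> D" and Q: "PP \<in> NLP" and eq: "PP \<inter> GRAPH_deg D = B0 \<inter> GRAPH_deg D"
  shows False
proof -
  obtain M r_id r p where lpM: "local_poly M" and rid: "r_id \<ge> 1"
    and ch: "\<forall>G\<in>GRAPH. \<forall>ident. loc_unique G r_id ident \<longrightarrow>
         (G \<in> PP \<longleftrightarrow> (\<exists>\<kappa>. bounded_cert G ident r p \<kappa> \<and> accepts M G ident \<kappa>))"
    using Q unfolding NLP_def by blast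
  obtain c q where cq0: "\<forall>G\<in>GRAPH. \<forall>ident \<kappa>. loc_unique G 1 ident \<longrightarrow>
      (\<forall>k<c. \<exists>s. exec M G ident \<kappa> k = Some s \<and>
         (\<forall>u\<in>V G. \<not> n_stopped (s u) \<longrightarrow>
            (\<exists>n \<le> poly q (length (tcontent (received G ident s u)) + length (tcontent (n_int (s u)))).
               halted M (tm_steps M n (round_cfg M (received G ident s u) (n_int (s u)))))))
      \<and> (\<exists>s. exec M G ident \<kappa> c = Some s \<and> (\<forall>u\<in>V G. n_stopped (s u)))"
    using lpM unfolding local_poly_def by blast
  have cq: "\<And>G ident \<kappa>. G \<in> GRAPH \<Longrightarrow> loc_unique G 1 ident \<Longrightarrow>
      \<exists>s. exec M G ident \<kappa> c = Some s \<and> (\<forall>u\<in>V G. n_stopped (s u))"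
    using cq0 by blast
  define W where "W = c + r + 1"
  define m where "m = 4 * r_id + 2 * W + 3"
  define S where "S = (2*r+1) * (m+2)"
  define Lm where "Lm = Max (poly p ` {0..S})"
  define KS where "KS = {l::bool list. set l \<subseteq> UNIV \<and> length l \<le> Lm}"
  define WS where "WS = {ws. set ws \<subseteq> KS \<and> length ws = 2*W+1}"
  define F where "F = card WS"
  define N where "N = m * (2*W + F + 2)"
  define t where "t = (\<lambda>a::nat. m * (W + 1 + a))"
  define LG where "LG = (\<lambda>u::nat. if u = 0 then [True] else ([]::bool list))"
  define G where "G = cyc N LG"
  have m3: "3 \<le> m" "2*r_id < m" "2*W + 3 \<le> m" by (simp_all add: m_def)
  have mN: "m \<le> N" "m dvd N" by (simp_all add: N_def)
  have N3: "3 \<le> N" using m3 mN by linarith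
  have N0: "0 < N" using N3 by simp
  have Wbig: "c \<le> W" "r \<le> W" by (simp_all add: W_def)
  have Gg: "is_graph G" unfolding G_def by (rule cyc_graph[OF N3])
  have GG: "G \<in> GRAPH" using Gg by (simp add: GRAPH_def)
  have degG: "G \<in> GRAPH_deg D"
  proof -
    have "card (nbrs G u) + length (lab G u) \<le> D" if "u \<in> V G" for u
    proof -
      have u: "u < N" using that by (simp add: G_def)
      have "card (nbrs G u) = 2" unfolding G_def by (rule cyc_card_nbrs[OF N3 u])
      moreover have "length (lab G u) \<le> 1" using u by (simp add: G_def cyc_lab LG_def)
      ultimately show ?thesis using D by simp
    qed
    then show ?thesis using GG by (simp add: GRAPH_deg_def)
  qed
  have GB: "G \<in> B0"
  proof -
    have "0 \<in> V G" "lab G 0 = [True]" using N0 by (simp_all add: G_def cyc_lab LG_def)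
    then show ?thesis using GG unfolding B0_def A0_def by force
  qed
  have GPP: "G \<in> PP" using eq GB degG by blast
  have luG: "loc_unique G r_id (idc m)" unfolding G_def by (rule cyc_loc_unique[OF N3 mN(2) m3(2)])
  have luG1: "loc_unique G 1 (idc m)" using loc_unique_mono[OF luG rid] .
  obtain \<kappa> where bc: "bounded_cert G (idc m) r p \<kappa>" and acc: "accepts M G (idc m) \<kappa>"
    using ch GG luG GPP by blast
  have kap: "\<kappa> u \<in> KS" if u: "u < N" for u
  proof -
    have "(\<Sum>v\<in>{v. dist_le G r u v}. 1 + length (lab G v) + length (idc m v))
        = (\<Sum>s\<in>{- int r..int r}. 1 + length (lab G (cadd N u s)) + length (idc m (cadd N u s)))"
      unfolding G_def by (rule cyc_ball_sum[OF N0 u]) (use m3 mN Wbig in linarith)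
    also have "\<dots> \<le> of_nat (card {- int r..int r}) * (m + 2)"
    proof (rule sum_bounded_above)
      fix s assume "s \<in> {- int r..int r}"
      have "length (lab G (cadd N u s)) \<le> 1" using cadd_lt[OF N0] by (simp add: G_def cyc_lab LG_def)
      moreover have "length (idc m (cadd N u s)) \<le> m" using m3 by (simp add: idc_def)
      ultimately show "1 + length (lab G (cadd N u s)) + length (idc m (cadd N u s)) \<le> m + 2" by simp
    qed
    also have "\<dots> = S"
    proof -
      have "card {- int r..int r} = 2 * r + 1" by simp
      then show ?thesis by (simp add: S_def)
    qed
    finally have sm: "(\<Sum>v\<in>{v. dist_le G r u v}. 1 + length (lab G v) + length (idc m v)) \<le> S" .
    have "length (\<kappa> u) \<le> poly p (\<Sum>v\<in>{v. dist_le G r u v}. 1 + length (lab G v) + length (idc m v))"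
      using bc u by (simp add: bounded_cert_def G_def)
    also have "\<dots> \<le> Lm" unfolding Lm_def using sm by (intro Max_ge) auto
    finally show ?thesis by (simp add: KS_def)
  qed
  define w where "w = (\<lambda>a. map (\<lambda>j. \<kappa> (t a - W + j)) [0..<2*W+1])"
  have tb: "W < t a" "t a + W < N" if "a \<le> F" for a
  proof -
    have w1: "W + 1 \<le> m * (W + 1)" using mult_le_mono1[of 1 m "W+1"] m3 by simp
    have "t a + m * (W + 1) = m * ((W + 1 + a) + (W + 1))" by (simp add: t_def distrib_left)
    also have "\<dots> \<le> N" unfolding N_def by (rule mult_le_mono2) (use that in simp)
    finally have "t a + m * (W + 1) \<le> N" .
    then show "t a + W < N" using w1 by linarith
    have "m * (W + 1) \<le> t a" unfolding t_def by (rule mult_le_mono2) simp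
    then show "W < t a" using w1 by linarith
  qed
  have wWS: "w a \<in> WS" if a: "a \<le> F" for a
  proof -
    have "\<kappa> (t a - W + j) \<in> KS" if "j < 2*W+1" for j
      using kap tb[OF a] that by simp
    then show ?thesis by (auto simp: w_def WS_def)
  qed
  have finWS: "finite WS" unfolding WS_def KS_def
    by (intro finite_lists_length_eq finite_lists_length_le) simp
  have ninj: "\<not> inj_on w {0..F}"
  proof
    assume "inj_on w {0..F}"
    then have "card (w ` {0..F}) = F + 1" by (simp add: card_image)
    moreover have "card (w ` {0..F}) \<le> card WS"
      by (rule card_mono[OF finWS]) (use wWS in auto)
    ultimately show False by (simp add: F_def)
  qed
  obtain a b where ab: "a < b" "b \<le> F" "w a = w b"
  proof -
    obtain x y where xy: "x \<in> {0..F}" "y \<in> {0..F}" "x \<noteq> y" "w x = w y"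
      using ninj unfolding inj_on_def by blast
    show ?thesis
    proof (cases "x < y")
      case True then show ?thesis using that[of x y] xy by auto
    next
      case False then show ?thesis using that[of y x] xy by auto
    qed
  qed
  have aF: "a \<le> F" using ab by simp
  have win: "\<kappa> (t a - W + j) = \<kappa> (t b - W + j)" if "j < 2*W+1" for j
  proof -
    have "w a ! j = w b ! j" using ab by simp
    then show ?thesis using that by (simp add: w_def del: upt_Suc)
  qed
  have wini: "\<kappa> (nat (int (t a) + d)) = \<kappa> (nat (int (t b) + d))" if d: "\<bar>d\<bar> \<le> int W" for d
  proof -
    have ta: "W < t a" "W < t b" using tb aF ab by auto
    have "t a - W + nat (d + int W) = nat (int (t a) + d)" using ta d by linarith
    moreover have "t b - W + nat (d + int W) = nat (int (t b) + d)" using ta d by linarith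
    moreover have "nat (d + int W) < 2*W+1" using d by linarith
    ultimately show ?thesis using win by metis
  qed
  define n where "n = t b - t a"
  have nm: "n = m * (b - a)"
  proof -
    have "n = m * ((W + 1 + b) - (W + 1 + a))" by (simp only: n_def t_def diff_mult_distrib2)
    then show ?thesis by simp
  qed
  have n3: "m \<le> n" "m dvd n" using ab by (auto simp: nm)
  have n0: "3 \<le> n" "0 < n" using n3 m3 by linarith+
  have tab: "t b = t a + n" using ab by (simp add: n_def t_def)
  have tbF: "t b + W < N" "W < t a" using tb ab aF by auto
  define \<kappa>H where "\<kappa>H = (\<lambda>x. \<kappa> (t a + x))"
  define H where "H = cyc n (\<lambda>_. [])"
  have Hg: "is_graph H" unfolding H_def by (rule cyc_graph[OF n0(1)])
  have HG: "H \<in> GRAPH" using Hg by (simp add: GRAPH_def)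
  have luH: "loc_unique H r_id (idc m)" unfolding H_def by (rule cyc_loc_unique[OF n0(1) n3(2) m3(2)])
  have luH1: "loc_unique H 1 (idc m)" using loc_unique_mono[OF luH rid] .
  have winH: "LG (cadd N (t a + x) s) = [] \<and> idc m (cadd n x s) = idc m (cadd N (t a + x) s)
      \<and> \<kappa>H (cadd n x s) = \<kappa> (cadd N (t a + x) s)" if x: "x < n" and s: "\<bar>s\<bar> \<le> int W" for x s
  proof -
    let ?z = "cadd n x s" and ?P = "cadd N (t a + x) s"
    have P: "int ?P = int (t a) + int x + s"
    proof -
      have "int ?P = (int (t a + x) + s) mod int N" by (rule cadd_int[OF N0])
      also have "\<dots> = int (t a + x) + s"
        by (rule mod_pos_pos_trivial) (use tbF tab x s in linarith)+
      finally show ?thesis by simp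
    qed
    have P0: "?P \<noteq> 0" using P tbF s by linarith
    have z: "int ?z = (int x + s) mod int n" by (rule cadd_int[OF n0(2)])
    have ids: "idc m ?z = idc m ?P"
    proof (rule idc_eq)
      have "int ?z mod int m = (int x + s) mod int m"
        using z n3(2) by (simp add: mod_mod_cancel)
      moreover have "int ?P mod int m = (int x + s) mod int m"
      proof -
        have "int m dvd int (t a)" by (simp add: t_def)
        then have "int m dvd int ?P - (int x + s)" using P by simp
        then show ?thesis by (simp only: mod_eq_dvd_iff)
      qed
      ultimately show "int ?z mod int m = int ?P mod int m" by simp
    qed
    have kk: "\<kappa>H ?z = \<kappa> ?P"
    proof -
      have kz: "\<kappa>H ?z = \<kappa> (nat (int (t a) + int ?z))" by (simp add: \<kappa>H_def flip: of_nat_add)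
      have kP: "\<kappa> ?P = \<kappa> (nat (int ?P))" by simp
      consider "0 \<le> int x + s \<and> int x + s < int n" | "int n \<le> int x + s" | "int x + s < 0" by linarith
      then show ?thesis
      proof cases
        case 1
        then have "int ?z = int x + s" using z mod_range_int[of "int x + s" 0 "int n"] by simp
        then show ?thesis using kz kP P by (simp add: add.assoc)
      next
        case 2
        then have zz: "int ?z = int x + s - int n" using z mod_range_int[of "int x + s" 1 "int n"] x s n3 m3 by simp
        have "\<kappa> (nat (int (t a) + int ?z)) = \<kappa> (nat (int (t b) + int ?z))"
          by (rule wini) (use zz x s in linarith)
        then show ?thesis using kz kP P zz tab by (simp add: add.assoc)
      next
        case 3
        then have zz: "int ?z = int x + s + int n" using z mod_range_int[of "int x + s" "-1" "int n"] x s n3 m3 by simp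
        have "\<kappa> (nat (int (t a) + (int x + s))) = \<kappa> (nat (int (t b) + (int x + s)))"
          by (rule wini) (use 3 s in linarith)
        moreover have "nat (int (t a) + int ?z) = nat (int (t b) + (int x + s))" using zz tab by simp
        moreover have "?P = nat (int (t a) + (int x + s))" using P by (metis add.assoc nat_int)
        ultimately show ?thesis using kz by simp
      qed
    qed
    show ?thesis using P0 ids kk by (simp add: LG_def)
  qed
  have cmp: "compat H (idc m) \<kappa>H G (idc m) \<kappa> c x (t a + x)" if x: "x < n" for x
    unfolding H_def G_def
  proof (rule cyc_compat[OF n0(1) N3 x])
    show "t a + x < N" using x tbF tab by linarith
    show "\<forall>s. \<bar>s\<bar> \<le> int c \<longrightarrow> [] = LG (cadd N (t a + x) s) \<and>
        idc m (cadd n x s) = idc m (cadd N (t a + x) s) \<and> \<kappa>H (cadd n x s) = \<kappa> (cadd N (t a + x) s)"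
      using winH[OF x] Wbig by force
  qed
  have bcH: "bounded_cert H (idc m) r p \<kappa>H"
    unfolding bounded_cert_def
  proof
    fix x assume "x \<in> V H"
    then have x: "x < n" by (simp add: H_def)
    have tx: "t a + x < N" using x tbF tab by linarith
    have "(\<Sum>v\<in>{v. dist_le H r x v}. 1 + length (lab H v) + length (idc m v))
        = (\<Sum>s\<in>{- int r..int r}. 1 + length (lab H (cadd n x s)) + length (idc m (cadd n x s)))"
      unfolding H_def by (rule cyc_ball_sum[OF n0(2) x]) (use m3 n3 Wbig in linarith)
    also have "\<dots> = (\<Sum>s\<in>{- int r..int r}. 1 + length (lab G (cadd N (t a + x) s)) + length (idc m (cadd N (t a + x) s)))"
    proof (rule sum.cong[OF refl])
      fix s assume "s \<in> {- int r..int r}"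
      then have s: "\<bar>s\<bar> \<le> int W" using Wbig by auto
      have "lab H (cadd n x s) = []" using cadd_lt[OF n0(2)] by (simp add: H_def cyc_lab)
      moreover have "lab G (cadd N (t a + x) s) = []" using cadd_lt[OF N0] winH[OF x s] by (simp add: G_def cyc_lab)
      ultimately show "1 + length (lab H (cadd n x s)) + length (idc m (cadd n x s)) =
          1 + length (lab G (cadd N (t a + x) s)) + length (idc m (cadd N (t a + x) s))"
        using winH[OF x s] by simp
    qed
    also have "\<dots> = (\<Sum>v\<in>{v. dist_le G r (t a + x) v}. 1 + length (lab G v) + length (idc m v))"
      unfolding G_def by (rule cyc_ball_sum[symmetric, OF N0 tx]) (use m3 mN Wbig in linarith)
    finally have se: "(\<Sum>v\<in>{v. dist_le H r x v}. 1 + length (lab H v) + length (idc m v)) =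
        (\<Sum>v\<in>{v. dist_le G r (t a + x) v}. 1 + length (lab G v) + length (idc m v))" .
    have "length (\<kappa> (t a + x)) \<le> poly p (\<Sum>v\<in>{v. dist_le G r (t a + x) v}. 1 + length (lab G v) + length (idc m v))"
      using bc tx by (simp add: bounded_cert_def G_def)
    then show "length (\<kappa>H x) \<le> poly p (\<Sum>v\<in>{v. dist_le H r x v}. 1 + length (lab H v) + length (idc m v))"
      unfolding se \<kappa>H_def by simp
  qed
  obtain s2 where s2: "exec M G (idc m) \<kappa> c = Some s2" "\<forall>u\<in>V G. n_stopped (s2 u)"
    using cq[OF GG luG1] by blast
  have bits2: "\<forall>u\<in>V G. bitsof (n_int (s2 u)) = [True]" by (rule accepts_at[OF acc s2])
  have all: "\<forall>x\<in>V H. \<exists>y. compat H (idc m) \<kappa>H G (idc m) \<kappa> c x y"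
    using cmp by (auto simp: H_def)
  obtain s1 where s1: "exec M H (idc m) \<kappa>H c = Some s1"
      "\<forall>x y. compat H (idc m) \<kappa>H G (idc m) \<kappa> c x y \<longrightarrow> s1 x = s2 y"
    using simulation[OF Hg Gg luH1 luG1 all order_refl s2(1)] by blast
  have accH: "accepts M H (idc m) \<kappa>H"
  proof -
    have "\<forall>x\<in>V H. n_stopped (s1 x) \<and> bitsof (n_int (s1 x)) = [True]"
    proof
      fix x assume "x \<in> V H"
      then have x: "x < n" by (simp add: H_def)
      have "t a + x \<in> V G" using x tbF tab by (simp add: G_def)
      then show "n_stopped (s1 x) \<and> bitsof (n_int (s1 x)) = [True]"
        using s1(2) cmp[OF x] s2(2) bits2 by simp
    qed
    then show ?thesis using s1(1) unfolding accepts_def by blast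
  qed
  have HPP: "H \<in> PP" using ch HG luH bcH accH by blast
  have degH: "H \<in> GRAPH_deg D"
  proof -
    have "card (nbrs H u) + length (lab H u) \<le> D" if "u \<in> V H" for u
    proof -
      have u: "u < n" using that by (simp add: H_def)
      have "card (nbrs H u) = 2" unfolding H_def by (rule cyc_card_nbrs[OF n0(1) u])
      moreover have "lab H u = []" using u by (simp add: H_def cyc_lab)
      ultimately show ?thesis using D by simp
    qed
    then show ?thesis using HG by (simp add: GRAPH_deg_def)
  qed
  have "H \<in> B0" using eq HPP degH by blast
  moreover have "H \<in> A0" using HG by (simp add: A0_def H_def cyc_lab)
  ultimately show False by (simp add: B0_def)
qed

lemma A0_prop: "graph_property A0"
  unfolding graph_property_def
proof (intro conjI ballI impI)
  show "A0 \<subseteq> GRAPH" by (auto simp: A0_def)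
  fix G H assume G: "G \<in> A0" and H: "H \<in> GRAPH" and iso: "graph_iso G H"
  then obtain f where f: "bij_betw f (V G) (V H)" "\<forall>u\<in>V G. lab H (f u) = lab G u"
    by (auto simp: graph_iso_def)
  have "\<forall>v\<in>V H. lab H v = []"
  proof
    fix v assume "v \<in> V H"
    then obtain u where "u \<in> V G" "v = f u" using f(1) by (auto simp: bij_betw_def)
    then show "lab H v = []" using f(2) G by (auto simp: A0_def)
  qed
  then show "H \<in> A0" using H by (simp add: A0_def)
qed

lemma GRAPH_V: "G \<in> GRAPH \<Longrightarrow> V G \<noteq> {}"
  by (simp add: GRAPH_def is_graph_def)

lemma A0_LP: "A0 \<in> LP"
proof -
  have "\<forall>G\<in>GRAPH. \<forall>ident. loc_unique G 1 ident \<longrightarrow> (accepts M0 G ident (\<lambda>_. []) \<longleftrightarrow> G \<in> A0)"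
    using accepts_M0[OF GRAPH_V] by (auto simp: A0_def)
  then show ?thesis unfolding LP_def using A0_prop local_poly_M0 by blast
qed

lemma A0_NLP: "A0 \<in> NLP"
proof -
  have "\<forall>G\<in>GRAPH. \<forall>ident. loc_unique G 1 ident \<longrightarrow>
         (G \<in> A0 \<longleftrightarrow> (\<exists>\<kappa>. bounded_cert G ident 1 0 \<kappa> \<and> accepts M0 G ident \<kappa>))"
    using accepts_M0[OF GRAPH_V] by (auto simp: A0_def bounded_cert_def)
  then show ?thesis unfolding NLP_def using A0_prop local_poly_M0 by blast
qed

lemma B0_coLP: "B0 \<in> coLP"
  unfolding coLP_def B0_def using A0_LP by blast

lemma compat_self:
  assumes "is_graph G" "\<forall>x\<in>V G. k1 x = k2 x"
  shows "x \<in> V G \<Longrightarrow> compat G i k1 G i k2 k x x"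
proof (induction k arbitrary: x)
  case 0 then show ?case using assms by simp
next
  case (Suc k)
  have "bij_betw id (nbrs G x) (nbrs G x)" by simp
  moreover have "\<forall>v\<in>nbrs G x. compat G i k1 G i k2 k v (id v)"
    using Suc.IH nbrs_V[OF assms(1)] by auto
  moreover have "compat G i k1 G i k2 k x x" by (rule Suc.IH[OF Suc.prems])
  ultimately show ?case unfolding compat.simps(2) by blast
qed

lemma accepts_cong:
  assumes "is_graph G" "loc_unique G 1 i" "\<forall>x\<in>V G. k1 x = k2 x" "accepts M G i k1"
  shows "accepts M G i k2"
proof -
  obtain k s where ks: "exec M G i k1 k = Some s" "\<forall>u\<in>V G. n_stopped (s u)"
    "\<forall>u\<in>V G. bitsof (n_int (s u)) = [True]" using assms(4) by (auto simp: accepts_def)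
  have sym: "\<forall>x\<in>V G. k2 x = k1 x" using assms(3) by simp
  have all: "\<forall>x\<in>V G. \<exists>y. compat G i k2 G i k1 k x y"
    using compat_self[OF assms(1) sym] by blast
  obtain s' where s': "exec M G i k2 k = Some s'" "\<forall>x y. compat G i k2 G i k1 k x y \<longrightarrow> s' x = s y"
    using simulation[OF assms(1,1,2,2) all order_refl ks(1)] by blast
  have "\<forall>x\<in>V G. s' x = s x" using s'(2) compat_self[OF assms(1) sym] by blast
  then have "\<forall>u\<in>V G. n_stopped (s' u) \<and> bitsof (n_int (s' u)) = [True]" using ks by simp
  then show ?thesis using s'(1) unfolding accepts_def by blast
qed

lemma LP_NLP: "P \<in> LP \<Longrightarrow> P \<in> NLP"
proof -
  assume "P \<in> LP"
  then obtain M r_id where M: "graph_property P" "local_poly M" "r_id \<ge> 1"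
    "\<forall>G\<in>GRAPH. \<forall>ident. loc_unique G r_id ident \<longrightarrow> (accepts M G ident (\<lambda>_. []) \<longleftrightarrow> G \<in> P)"
    unfolding LP_def by blast
  have "\<forall>G\<in>GRAPH. \<forall>ident. loc_unique G r_id ident \<longrightarrow>
         (G \<in> P \<longleftrightarrow> (\<exists>\<kappa>. bounded_cert G ident 1 0 \<kappa> \<and> accepts M G ident \<kappa>))"
  proof (intro ballI allI impI)
    fix G ident assume G: "G \<in> GRAPH" and lu: "loc_unique G r_id ident"
    have g: "is_graph G" using G by (simp add: GRAPH_def)
    have l1: "loc_unique G 1 ident" using loc_unique_mono lu M(3) by blast
    show "G \<in> P \<longleftrightarrow> (\<exists>\<kappa>. bounded_cert G ident 1 0 \<kappa> \<and> accepts M G ident \<kappa>)"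
    proof
      assume "G \<in> P"
      then have "accepts M G ident (\<lambda>_. [])" using M(4) G lu by blast
      moreover have "bounded_cert G ident 1 0 (\<lambda>_. [])" by (simp add: bounded_cert_def)
      ultimately show "\<exists>\<kappa>. bounded_cert G ident 1 0 \<kappa> \<and> accepts M G ident \<kappa>" by blast
    next
      assume "\<exists>\<kappa>. bounded_cert G ident 1 0 \<kappa> \<and> accepts M G ident \<kappa>"
      then obtain \<kappa> where bc: "bounded_cert G ident 1 0 \<kappa>" and acc: "accepts M G ident \<kappa>" by blast
      have "\<forall>x\<in>V G. \<kappa> x = (\<lambda>_. []) x" using bc by (auto simp: bounded_cert_def)
      then have "accepts M G ident (\<lambda>_. [])" by (rule accepts_cong[OF g l1 _ acc])
      then show "G \<in> P" using M(4) G lu by blast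
    qed
  qed
  then have "\<exists>M r_id r (p :: nat poly). local_poly M \<and> r_id \<ge> 1 \<and> r \<ge> 1 \<and>
      (\<forall>G\<in>GRAPH. \<forall>ident. loc_unique G r_id ident \<longrightarrow>
         (G \<in> P \<longleftrightarrow> (\<exists>\<kappa>. bounded_cert G ident r p \<kappa> \<and> accepts M G ident \<kappa>)))"
    using M(2,3) by (intro exI[of _ M] exI[of _ r_id] exI[of _ "1::nat"] exI[of _ "0::nat poly"]) simp
  then show ?thesis unfolding NLP_def using M(1) by blast
qed

theorem proposition9p3:
  shows "(\<forall>D::nat. D \<ge> 3 \<longrightarrow>
            \<not> restrict_class coLP (GRAPH_deg D) \<subseteq> restrict_class NLP (GRAPH_deg D)
          \<and> \<not> restrict_class NLP (GRAPH_deg D) \<subseteq> restrict_class coLP (GRAPH_deg D))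
        \<and> \<not> coLP \<subseteq> NLP \<and> \<not> NLP \<subseteq> coLP"
proof -
  have GD: "GRAPH_deg D \<subseteq> GRAPH" for D by (auto simp: GRAPH_deg_def)
  have A0G: "A0 \<subseteq> GRAPH" by (auto simp: A0_def)
  have compl: "Q' \<inter> GRAPH_deg D = B0 \<inter> GRAPH_deg D" if "GRAPH - Q' = A0" "Q' \<subseteq> GRAPH" for Q' D
    using that GD[of D] unfolding B0_def by blast
  have c1: "\<not> restrict_class coLP (GRAPH_deg D) \<subseteq> restrict_class NLP (GRAPH_deg D)" if D: "3 \<le> D" for D
  proof
    assume "restrict_class coLP (GRAPH_deg D) \<subseteq> restrict_class NLP (GRAPH_deg D)"
    then have "B0 \<inter> GRAPH_deg D \<in> restrict_class NLP (GRAPH_deg D)"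
      using B0_coLP unfolding restrict_class_def by blast
    then obtain PP where "PP \<in> NLP" "B0 \<inter> GRAPH_deg D = PP \<inter> GRAPH_deg D"
      unfolding restrict_class_def by blast
    then show False using key[OF D] by metis
  qed
  have c2: "\<not> restrict_class NLP (GRAPH_deg D) \<subseteq> restrict_class coLP (GRAPH_deg D)" if D: "3 \<le> D" for D
  proof
    assume "restrict_class NLP (GRAPH_deg D) \<subseteq> restrict_class coLP (GRAPH_deg D)"
    then have "A0 \<inter> GRAPH_deg D \<in> restrict_class coLP (GRAPH_deg D)"
      using A0_NLP unfolding restrict_class_def by blast
    then obtain Q' where Q': "Q' \<in> LP" "A0 \<inter> GRAPH_deg D = (GRAPH - Q') \<inter> GRAPH_deg D"
      unfolding restrict_class_def coLP_def by blast
    have "Q' \<subseteq> GRAPH" using Q'(1) by (auto simp: LP_def graph_property_def)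
    then have "Q' \<inter> GRAPH_deg D = B0 \<inter> GRAPH_deg D"
      using Q'(2) GD[of D] A0G unfolding B0_def by blast
    then show False using key[OF D LP_NLP[OF Q'(1)]] by blast
  qed
  have c3: "\<not> coLP \<subseteq> NLP"
  proof
    assume "coLP \<subseteq> NLP"
    then have "B0 \<in> NLP" using B0_coLP by blast
    then show False using key[of 3 B0] by simp
  qed
  have c4: "\<not> NLP \<subseteq> coLP"
  proof
    assume "NLP \<subseteq> coLP"
    then have "A0 \<in> coLP" using A0_NLP by blast
    then obtain Q' where Q': "Q' \<in> LP" "A0 = GRAPH - Q'" unfolding coLP_def by blast
    have "Q' \<subseteq> GRAPH" using Q'(1) by (auto simp: LP_def graph_property_def)
    then have "Q' \<inter> GRAPH_deg 3 = B0 \<inter> GRAPH_deg 3" using compl Q'(2) by blast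
    then show False using key[of 3 Q'] LP_NLP[OF Q'(1)] by simp
  qed
  show ?thesis using c1 c2 c3 c4 by blast
qed

end
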